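(* Let $g:[a,b]\to\mathbb R$ be increasing and left-continuous at every point of $(a,b)$, and let $f:[a,b]\to\mathbb R$ be $g$-Lipschitz continuous with Lipschitz constant $H$. Then $f^C$ is $g^C$-Lipschitz continuous with Lipschitz constant $H$.
   Context: For a function $\varphi:[a,b]\to\mathbb R$ having right limits, $\Delta^+\varphi(t)=\varphi(t^+)-\varphi(t)$, its jump part is $\varphi^B(t)=\sum_{s\in[a,t)}\Delta^+\varphi(s)$ and its continuous part is $\varphi^C=\varphi-\varphi^B$ (applied to both $f$ and $g$). For functions $u,v$ on $[a,b]$, $u$ is $v$-Lipschitz continuous with constant $H$ if $|u(t)-u(s)|\le H|v(t)-v(s)|$ for all $t,s\in[a,b]$. *)

theory Defs
  imports "HOL-Analysis.Analysis"
begin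

definition rlim :: "(real \<Rightarrow> real) \<Rightarrow> real \<Rightarrow> real" where
  "rlim \<phi> t = Lim (at_right t) \<phi>"

definition jump_plus :: "(real \<Rightarrow> real) \<Rightarrow> real \<Rightarrow> real" where
  "jump_plus \<phi> t = rlim \<phi> t - \<phi> t"

definition jump_part :: "real \<Rightarrow> (real \<Rightarrow> real) \<Rightarrow> real \<Rightarrow> real" where
  "jump_part a \<phi> t = infsum (jump_plus \<phi>) {a..<t}"

definition cont_part :: "real \<Rightarrow> (real \<Rightarrow> real) \<Rightarrow> real \<Rightarrow> real" where
  "cont_part a \<phi> t = \<phi> t - jump_part a \<phi> t"

definition lipschitz_wrt :: "real \<Rightarrow> real \<Rightarrow> (real \<Rightarrow> real) \<Rightarrow> (real \<Rightarrow> real) \<Rightarrow> real \<Rightarrow> bool" where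
  "lipschitz_wrt a b u v H \<longleftrightarrow>
     (\<forall>t\<in>{a..b}. \<forall>s\<in>{a..b}. \<bar>u t - u s\<bar> \<le> H * \<bar>v t - v s\<bar>)"

end

theory Submission
  imports Defs
begin

lemma mono_rlim:
  fixes \<phi> :: "real \<Rightarrow> real"
  assumes m: "mono_on {a..b} \<phi>" and u: "a \<le> u" "u < b"
  shows "(\<phi> \<longlongrightarrow> rlim \<phi> u) (at_right u)"
proof -
  have "(\<phi> \<longlongrightarrow> Inf (\<phi> ` ({u<..} \<inter> {a..b}))) (at u within ({u<..} \<inter> {a..b}))"
    by (rule Lim_right_bound[where K="\<phi> u"]) (use m u in \<open>auto intro: mono_onD\<close>)
  moreover have "at u within ({u<..} \<inter> {a..b}) = at u within {u..b}"
    by (rule at_within_nhd[where S=UNIV]) (use u in auto)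
  moreover have "at u within {u..b} = at_right u"
    using u(2) by (rule at_within_Icc_at_right)
  ultimately have "(\<phi> \<longlongrightarrow> Inf (\<phi> ` ({u<..} \<inter> {a..b}))) (at_right u)" by simp
  then show ?thesis unfolding rlim_def using tendsto_Lim trivial_limit_at_right_real
    by metis
qed

lemma lim_bound:
  fixes f g :: "real \<Rightarrow> real"
  assumes lf: "(f \<longlongrightarrow> rlim f u) (at_right u)"
    and lg: "(g \<longlongrightarrow> rlim g u) (at_right u)"
    and mg: "mono_on {a..b} g"
    and lip: "lipschitz_wrt a b f g H"
    and u: "a \<le> u" "u < v" "v \<le> b"
  shows "\<bar>f v - rlim f u\<bar> \<le> H * (g v - rlim g u)"
proof -
  have ev: "eventually (\<lambda>x. \<bar>f v - f x\<bar> \<le> H * (g v - g x)) (at_right u)"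
    unfolding eventually_at_right[OF u(2)]
  proof (intro exI[of _ v] conjI allI impI)
    fix x assume x: "u < x" "x < v"
    have "g x \<le> g v" using x u by (intro mono_onD[OF mg]) auto
    moreover have "\<bar>f v - f x\<bar> \<le> H * \<bar>g v - g x\<bar>"
      using lip x u unfolding lipschitz_wrt_def by auto
    ultimately show "\<bar>f v - f x\<bar> \<le> H * (g v - g x)" by simp
  qed (use u in auto)
  have t1: "((\<lambda>x. \<bar>f v - f x\<bar>) \<longlongrightarrow> \<bar>f v - rlim f u\<bar>) (at_right u)"
    by (intro tendsto_intros lf)
  have t2: "((\<lambda>x. H * (g v - g x)) \<longlongrightarrow> H * (g v - rlim g u)) (at_right u)"
    by (intro tendsto_intros lg)
  show ?thesis by (rule tendsto_le[OF _ t2 t1 ev]) simp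
qed

lemma jump_bound:
  fixes f g :: "real \<Rightarrow> real"
  assumes lf: "(f \<longlongrightarrow> rlim f u) (at_right u)"
    and lg: "(g \<longlongrightarrow> rlim g u) (at_right u)"
    and mg: "mono_on {a..b} g"
    and lip: "lipschitz_wrt a b f g H"
    and u: "a \<le> u" "u < b"
  shows "\<bar>jump_plus f u\<bar> \<le> H * jump_plus g u"
proof -
  have ev: "eventually (\<lambda>x. \<bar>f x - f u\<bar> \<le> H * (g x - g u)) (at_right u)"
    unfolding eventually_at_right[OF u(2)]
  proof (intro exI[of _ b] conjI allI impI)
    fix x assume x: "u < x" "x < b"
    have "g u \<le> g x" using x u by (intro mono_onD[OF mg]) auto
    moreover have "\<bar>f x - f u\<bar> \<le> H * \<bar>g x - g u\<bar>"
      using lip x u unfolding lipschitz_wrt_def by auto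
    ultimately show "\<bar>f x - f u\<bar> \<le> H * (g x - g u)" by simp
  qed (use u in auto)
  have t1: "((\<lambda>x. \<bar>f x - f u\<bar>) \<longlongrightarrow> \<bar>rlim f u - f u\<bar>) (at_right u)"
    by (intro tendsto_intros lf)
  have t2: "((\<lambda>x. H * (g x - g u)) \<longlongrightarrow> H * (rlim g u - g u)) (at_right u)"
    by (intro tendsto_intros lg)
  show ?thesis unfolding jump_plus_def by (rule tendsto_le[OF _ t2 t1 ev]) simp
qed

lemma jump_nonneg:
  fixes g :: "real \<Rightarrow> real"
  assumes lg: "(g \<longlongrightarrow> rlim g u) (at_right u)"
    and mg: "mono_on {a..b} g"
    and u: "a \<le> u" "u < b"
  shows "0 \<le> jump_plus g u"
proof -
  have ev: "eventually (\<lambda>x. g u \<le> g x) (at_right u)"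
    unfolding eventually_at_right[OF u(2)]
    by (intro exI[of _ b] conjI allI impI) (use u in \<open>auto intro!: mono_onD[OF mg]\<close>)
  have "g u \<le> rlim g u" by (rule tendsto_le[OF _ lg tendsto_const ev]) simp
  then show ?thesis unfolding jump_plus_def by simp
qed

lemma finite_bound:
  fixes f g :: "real \<Rightarrow> real"
  assumes lf: "\<And>u. a \<le> u \<Longrightarrow> u < b \<Longrightarrow> (f \<longlongrightarrow> rlim f u) (at_right u)"
    and lg: "\<And>u. a \<le> u \<Longrightarrow> u < b \<Longrightarrow> (g \<longlongrightarrow> rlim g u) (at_right u)"
    and mg: "mono_on {a..b} g"
    and lip: "lipschitz_wrt a b f g H"
    and F: "finite F"
  shows "\<forall>t. a \<le> s \<longrightarrow> s \<le> t \<longrightarrow> t \<le> b \<longrightarrow> F \<subseteq> {s..<t} \<longrightarrow>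
     \<bar>f t - f s - sum (jump_plus f) F\<bar> \<le> H * (g t - g s - sum (jump_plus g) F)"
  using F
proof (induction F rule: finite_linorder_max_induct)
  case empty
  show ?case
  proof (intro allI impI)
    fix t assume t: "a \<le> s" "s \<le> t" "t \<le> b"
    have "g s \<le> g t" using t by (intro mono_onD[OF mg]) auto
    moreover have "\<bar>f t - f s\<bar> \<le> H * \<bar>g t - g s\<bar>"
      using lip t unfolding lipschitz_wrt_def by auto
    ultimately show "\<bar>f t - f s - sum (jump_plus f) {}\<bar> \<le> H * (g t - g s - sum (jump_plus g) {})"
      by simp
  qed
next
  case (insert c A)
  show ?case
  proof (intro allI impI)
    fix t assume t: "a \<le> s" "s \<le> t" "t \<le> b" "insert c A \<subseteq> {s..<t}"
    have c: "s \<le> c" "c < t" using t by auto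
    have A: "A \<subseteq> {s..<c}" using t insert.hyps(2) by auto
    have IH: "\<bar>f c - f s - sum (jump_plus f) A\<bar> \<le> H * (g c - g s - sum (jump_plus g) A)"
      using insert.IH t c A by auto
    have L: "\<bar>f t - rlim f c\<bar> \<le> H * (g t - rlim g c)"
      by (rule lim_bound[OF lf lg mg lip]) (use t c in auto)
    have nc: "c \<notin> A" using insert.hyps(2) by auto
    have "sum (jump_plus f) (insert c A) = rlim f c - f c + sum (jump_plus f) A"
      using insert.hyps(1) nc by (simp add: jump_plus_def)
    moreover have "sum (jump_plus g) (insert c A) = rlim g c - g c + sum (jump_plus g) A"
      using insert.hyps(1) nc by (simp add: jump_plus_def)
    ultimately show "\<bar>f t - f s - sum (jump_plus f) (insert c A)\<bar>
        \<le> H * (g t - g s - sum (jump_plus g) (insert c A))"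
    proof -
      have e: "f t - f s - sum (jump_plus f) (insert c A) = (f t - rlim f c) + (f c - f s - sum (jump_plus f) A)"
        using \<open>sum (jump_plus f) (insert c A) = _\<close> by simp
      have e2: "g t - g s - sum (jump_plus g) (insert c A) = (g t - rlim g c) + (g c - g s - sum (jump_plus g) A)"
        using \<open>sum (jump_plus g) (insert c A) = _\<close> by simp
      show ?thesis unfolding e e2 using IH L abs_triangle_ineq[of "f t - rlim f c" "f c - f s - sum (jump_plus f) A"]
        by (simp add: distrib_left)
    qed
  qed
qed

lemma g_summable:
  fixes g :: "real \<Rightarrow> real"
  assumes lg: "\<And>u. a \<le> u \<Longrightarrow> u < b \<Longrightarrow> (g \<longlongrightarrow> rlim g u) (at_right u)"
    and mg: "mono_on {a..b} g"
  shows "jump_plus g summable_on {a..<b}"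
proof (rule nonneg_bdd_above_summable_on)
  show "0 \<le> jump_plus g x" if "x \<in> {a..<b}" for x
    using that by (intro jump_nonneg[OF lg mg]) auto
  have lipg: "lipschitz_wrt a b g g 1" unfolding lipschitz_wrt_def by simp
  show "bdd_above (sum (jump_plus g) ` {F. F \<subseteq> {a..<b} \<and> finite F})"
  proof (rule bdd_aboveI2[where M="\<bar>g b - g a\<bar>"])
    fix F assume F: "F \<in> {F. F \<subseteq> {a..<b} \<and> finite F}"
    show "sum (jump_plus g) F \<le> \<bar>g b - g a\<bar>"
    proof (cases "a \<le> b")
      case True
      have "\<bar>g b - g a - sum (jump_plus g) F\<bar> \<le> 1 * (g b - g a - sum (jump_plus g) F)"
        using finite_bound[OF lg lg mg lipg, of F a] F True by auto
      moreover have "g a \<le> g b" using True by (intro mono_onD[OF mg]) auto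
      ultimately show ?thesis
        using abs_ge_zero[of "g b - g a - sum (jump_plus g) F"] abs_ge_self[of "g b - g a"] by simp
    next
      case False
      then have "F = {}" using F by auto
      then show ?thesis by simp
    qed
  qed
qed

lemma f_summable:
  fixes f g :: "real \<Rightarrow> real"
  assumes lf: "\<And>u. a \<le> u \<Longrightarrow> u < b \<Longrightarrow> (f \<longlongrightarrow> rlim f u) (at_right u)"
    and lg: "\<And>u. a \<le> u \<Longrightarrow> u < b \<Longrightarrow> (g \<longlongrightarrow> rlim g u) (at_right u)"
    and mg: "mono_on {a..b} g"
    and lip: "lipschitz_wrt a b f g H"
  shows "jump_plus f summable_on {a..<b}"
proof (rule Infinite_Sum.abs_summable_summable)
  have "(\<lambda>x. \<bar>H\<bar> * jump_plus g x) summable_on {a..<b}"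
    by (intro summable_on_cmult_right g_summable[OF lg mg])
  then show "(\<lambda>x. norm (jump_plus f x)) summable_on {a..<b}"
  proof (rule Infinite_Sum.abs_summable_on_comparison_test')
    fix x assume x: "x \<in> {a..<b}"
    have "\<bar>jump_plus f x\<bar> \<le> H * jump_plus g x"
      using x by (intro jump_bound[OF lf lg mg lip]) auto
    moreover have "0 \<le> jump_plus g x" using x by (intro jump_nonneg[OF lg mg]) auto
    ultimately show "norm (jump_plus f x) \<le> \<bar>H\<bar> * jump_plus g x"
      by (simp add: abs_mult) (metis abs_ge_self dual_order.trans mult_right_mono)
  qed
qed

lemma inf_bound:
  fixes f g :: "real \<Rightarrow> real"
  assumes lf: "\<And>u. a \<le> u \<Longrightarrow> u < b \<Longrightarrow> (f \<longlongrightarrow> rlim f u) (at_right u)"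
    and lg: "\<And>u. a \<le> u \<Longrightarrow> u < b \<Longrightarrow> (g \<longlongrightarrow> rlim g u) (at_right u)"
    and mg: "mono_on {a..b} g"
    and lip: "lipschitz_wrt a b f g H"
    and st: "a \<le> s" "s \<le> t" "t \<le> b"
  shows "\<bar>f t - f s - infsum (jump_plus f) {s..<t}\<bar> \<le> H * (g t - g s - infsum (jump_plus g) {s..<t})"
proof -
  have sub: "{s..<t} \<subseteq> {a..<b}" using st by auto
  have sf: "jump_plus f summable_on {s..<t}"
    by (rule summable_on_subset_banach[OF f_summable[OF lf lg mg lip] sub])
  have sg: "jump_plus g summable_on {s..<t}"
    by (rule summable_on_subset_banach[OF g_summable[OF lg mg] sub])
  have hf: "(sum (jump_plus f) \<longlongrightarrow> infsum (jump_plus f) {s..<t}) (finite_subsets_at_top {s..<t})"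
    using has_sum_infsum[OF sf] unfolding has_sum_def .
  have hg: "(sum (jump_plus g) \<longlongrightarrow> infsum (jump_plus g) {s..<t}) (finite_subsets_at_top {s..<t})"
    using has_sum_infsum[OF sg] unfolding has_sum_def .
  have t1: "((\<lambda>F. \<bar>f t - f s - sum (jump_plus f) F\<bar>) \<longlongrightarrow> \<bar>f t - f s - infsum (jump_plus f) {s..<t}\<bar>) (finite_subsets_at_top {s..<t})"
    by (intro tendsto_intros hf)
  have t2: "((\<lambda>F. H * (g t - g s - sum (jump_plus g) F)) \<longlongrightarrow> H * (g t - g s - infsum (jump_plus g) {s..<t})) (finite_subsets_at_top {s..<t})"
    by (intro tendsto_intros hg)
  have ev: "eventually (\<lambda>F. \<bar>f t - f s - sum (jump_plus f) F\<bar> \<le> H * (g t - g s - sum (jump_plus g) F)) (finite_subsets_at_top {s..<t})"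
    using finite_bound[OF lf lg mg lip] st by (intro eventually_finite_subsets_at_top_weakI) blast
  show ?thesis by (rule tendsto_le[OF _ t2 t1 ev]) simp
qed

lemma jump_part_diff:
  fixes \<phi> :: "real \<Rightarrow> real"
  assumes sm: "jump_plus \<phi> summable_on {a..<b}" and st: "a \<le> s" "s \<le> t" "t \<le> b"
  shows "jump_part a \<phi> t - jump_part a \<phi> s = infsum (jump_plus \<phi>) {s..<t}"
proof -
  have "{a..<t} = {a..<s} \<union> {s..<t}" using st by auto
  moreover have "infsum (jump_plus \<phi>) ({a..<s} \<union> {s..<t}) = infsum (jump_plus \<phi>) {a..<s} + infsum (jump_plus \<phi>) {s..<t}"
    by (rule infsum_Un_disjoint) (use st in \<open>auto intro: summable_on_subset_banach[OF sm]\<close>)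
  ultimately show ?thesis unfolding jump_part_def by simp
qed

theorem mainTheorem5:
  fixes f g :: "real \<Rightarrow> real" and a b H :: real
  assumes "mono_on {a..b} g"
    and "\<And>t. t \<in> {a<..<b} \<Longrightarrow> continuous (at_left t) g"
    and "lipschitz_wrt a b f g H"
  shows "lipschitz_wrt a b (cont_part a f) (cont_part a g) H"
proof -
  note mg = assms(1) and lip = assms(3)
  have lg: "(g \<longlongrightarrow> rlim g u) (at_right u)" if "a \<le> u" "u < b" for u
    using mono_rlim[OF mg that] .
  define h where "h x = f x + H * g x" for x
  have mh: "mono_on {a..b} h"
  proof (rule mono_onI)
    fix x y assume xy: "x \<in> {a..b}" "y \<in> {a..b}" "x \<le> y"
    have "g x \<le> g y" using xy by (intro mono_onD[OF mg])
    moreover have "\<bar>f y - f x\<bar> \<le> H * \<bar>g y - g x\<bar>" using lip xy unfolding lipschitz_wrt_def by auto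
    moreover have "-(f y - f x) \<le> \<bar>f y - f x\<bar>" by simp
    ultimately show "h x \<le> h y" unfolding h_def by (simp add: right_diff_distrib)
  qed
  have lf: "(f \<longlongrightarrow> rlim f u) (at_right u)" if u: "a \<le> u" "u < b" for u
  proof -
    have "((\<lambda>x. h x - H * g x) \<longlongrightarrow> rlim h u - H * rlim g u) (at_right u)"
      by (intro tendsto_intros mono_rlim[OF mh u] lg[OF u])
    then have T: "(f \<longlongrightarrow> rlim h u - H * rlim g u) (at_right u)" unfolding h_def by simp
    then have "rlim f u = rlim h u - H * rlim g u" unfolding rlim_def
      by (intro tendsto_Lim) simp_all
    with T show ?thesis by simp
  qed
  have sf: "jump_plus f summable_on {a..<b}" by (rule f_summable[OF lf lg mg lip])
  have sg: "jump_plus g summable_on {a..<b}" by (rule g_summable[OF lg mg])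
  have key: "\<bar>cont_part a f t - cont_part a f s\<bar> \<le> H * \<bar>cont_part a g t - cont_part a g s\<bar>"
    if st: "a \<le> s" "s \<le> t" "t \<le> b" for s t
  proof -
    have B: "\<bar>f t - f s - infsum (jump_plus f) {s..<t}\<bar> \<le> H * (g t - g s - infsum (jump_plus g) {s..<t})"
      by (rule inf_bound[OF lf lg mg lip st])
    have lipg: "lipschitz_wrt a b g g 1" unfolding lipschitz_wrt_def by simp
    have B1: "\<bar>g t - g s - infsum (jump_plus g) {s..<t}\<bar> \<le> 1 * (g t - g s - infsum (jump_plus g) {s..<t})"
      by (rule inf_bound[OF lg lg mg lipg st])
    have df: "cont_part a f t - cont_part a f s = f t - f s - infsum (jump_plus f) {s..<t}"
      using jump_part_diff[OF sf st] unfolding cont_part_def by simp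
    have dg: "cont_part a g t - cont_part a g s = g t - g s - infsum (jump_plus g) {s..<t}"
      using jump_part_diff[OF sg st] unfolding cont_part_def by simp
    have "\<bar>g t - g s - infsum (jump_plus g) {s..<t}\<bar> = g t - g s - infsum (jump_plus g) {s..<t}"
      using B1 by simp
    then show ?thesis unfolding df dg using B by simp
  qed
  show ?thesis unfolding lipschitz_wrt_def
  proof (intro ballI)
    fix t s assume t: "t \<in> {a..b}" and s: "s \<in> {a..b}"
    show "\<bar>cont_part a f t - cont_part a f s\<bar> \<le> H * \<bar>cont_part a g t - cont_part a g s\<bar>"
    proof (cases "s \<le> t")
      case True then show ?thesis using key[of s t] s t by auto
    next
      case False
      then have "\<bar>cont_part a f s - cont_part a f t\<bar> \<le> H * \<bar>cont_part a g s - cont_part a g t\<bar>"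
        using key[of t s] s t by auto
      then show ?thesis by (simp add: abs_minus_commute)
    qed
  qed
qed

end
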